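(* Let $F,G$ be signatures on the same finite variable set $V$ such that the pair $(F,G)$ is linearly independent, but for every partial configuration $p$ of $V$ with $\mathrm{dom}(p)\ne\emptyset$ the pair $(F_p,G_p)$ is linearly dependent. Then there is a configuration $x\in\mathrm{supp}(F)$ such that $\mathrm{supp}(F)\cup\mathrm{supp}(G)=\{x,\overline{x}\}$.
   Context: A signature on a finite set $V$ is a function $F:\{0,1\}^V\to\mathbb{R}_{\ge0}$; $\mathrm{supp}(F)=\{x:F(x)\ne0\}$. A pair $(F,G)$ of signatures on $V$ is linearly dependent if there exist reals $\lambda,\mu$, not both zero, with $\lambda F=\mu G$; otherwise linearly independent. A partial configuration $p$ of $V$ is an element of $\{0,1\}^{\mathrm{dom}(p)}$, $\mathrm{dom}(p)\subseteq V$; the pinning $F_p$ is the signature on $V\setminus\mathrm{dom}(p)$ given by $F_p(x)=F(x,p)$, where $(x,p)$ is the common extension. $\overline{x}$ denotes the complement, $\overline{x}_i=1-x_i$. *)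

theory Defs
  imports "HOL-Library.FuncSet" Complex_Main
begin

text \<open>Configurations of a variable set V: boolean assignments on V (False = 0, True = 1),
  represented extensionally (value undefined outside V).\<close>
definition configs :: "'v set \<Rightarrow> ('v \<Rightarrow> bool) set" where
  "configs V = V \<rightarrow>\<^sub>E (UNIV :: bool set)"

definition is_signature :: "'v set \<Rightarrow> (('v \<Rightarrow> bool) \<Rightarrow> real) \<Rightarrow> bool" where
  "is_signature V F \<longleftrightarrow> (\<forall>x\<in>configs V. F x \<ge> 0)"

definition supp :: "'v set \<Rightarrow> (('v \<Rightarrow> bool) \<Rightarrow> real) \<Rightarrow> ('v \<Rightarrow> bool) set" where
  "supp V F = {x \<in> configs V. F x \<noteq> 0}"

definition lin_dep :: "'v set \<Rightarrow> (('v \<Rightarrow> bool) \<Rightarrow> real) \<Rightarrow> (('v \<Rightarrow> bool) \<Rightarrow> real) \<Rightarrow> bool" where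
  "lin_dep V F G \<longleftrightarrow> (\<exists>l m :: real. (l \<noteq> 0 \<or> m \<noteq> 0) \<and> (\<forall>x\<in>configs V. l * F x = m * G x))"

definition pin :: "'v set \<Rightarrow> ('v \<Rightarrow> bool) \<Rightarrow> (('v \<Rightarrow> bool) \<Rightarrow> real) \<Rightarrow> (('v \<Rightarrow> bool) \<Rightarrow> real)" where
  "pin D p F = (\<lambda>x. F (\<lambda>v. if v \<in> D then p v else x v))"

definition compl_config :: "'v set \<Rightarrow> ('v \<Rightarrow> bool) \<Rightarrow> ('v \<Rightarrow> bool)" where
  "compl_config V x = (\<lambda>v\<in>V. \<not> x v)"

end

theory Submission
  imports Defs
begin

lemma configs_ext:
  assumes "a \<in> configs V" "b \<in> configs V" "\<And>v. v \<in> V \<Longrightarrow> a v = b v"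
  shows "a = b"
  using assms unfolding configs_def by (auto intro: extensionalityI)

lemma compl_in: "y \<in> configs V \<Longrightarrow> compl_config V y \<in> configs V"
  unfolding configs_def compl_config_def by auto

lemma compl_compl: "y \<in> configs V \<Longrightarrow> compl_config V (compl_config V y) = y"
  by (rule configs_ext[OF compl_in[OF compl_in]]) (auto simp: compl_config_def)

lemma det_exists:
  assumes "\<not> lin_dep V F G"
  shows "\<exists>y\<in>configs V. \<exists>z\<in>configs V. F y * G z - F z * G y \<noteq> 0"
proof (rule ccontr)
  assume H: "\<not> ?thesis"
  show False
  proof (cases "\<exists>x0\<in>configs V. F x0 \<noteq> 0 \<or> G x0 \<noteq> 0")
    case True
    then obtain x0 where x0: "x0 \<in> configs V" "F x0 \<noteq> 0 \<or> G x0 \<noteq> 0" by blast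
    have "\<forall>x\<in>configs V. G x0 * F x = F x0 * G x"
      using H x0(1) by (auto simp: algebra_simps)
    then have "lin_dep V F G" unfolding lin_dep_def using x0(2) by blast
    then show False using assms by simp
  next
    case False
    then have "lin_dep V F G" unfolding lin_dep_def by (intro exI[of _ 1] exI[of _ 0]) auto
    then show False using assms by simp
  qed
qed

lemma agree_det:
  fixes V :: "'v set" and F G :: "('v \<Rightarrow> bool) \<Rightarrow> real"
  assumes H: "\<And>D p. D \<subseteq> V \<Longrightarrow> D \<noteq> {} \<Longrightarrow> p \<in> configs D \<Longrightarrow>
           lin_dep (V - D) (pin D p F) (pin D p G)"
    and y: "y \<in> configs V" and z: "z \<in> configs V" and v: "v \<in> V" and eq: "y v = z v"
  shows "F y * G z - F z * G y = 0"
proof -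
  define p where "p = (\<lambda>u\<in>{v}. y v)"
  have p: "p \<in> configs {v}" unfolding p_def configs_def by auto
  obtain l m where lm: "l \<noteq> 0 \<or> m \<noteq> 0"
    and all: "\<forall>x\<in>configs (V - {v}). l * pin {v} p F x = m * pin {v} p G x"
    using H[of "{v}" p] v p unfolding lin_dep_def by auto
  have r: "restrict w (V - {v}) \<in> configs (V - {v})" for w
    unfolding configs_def by auto
  have cy: "(\<lambda>u. if u \<in> {v} then p u else restrict y (V - {v}) u) = y"
  proof
    fix u show "(if u \<in> {v} then p u else restrict y (V - {v}) u) = y u"
      using y unfolding configs_def p_def by (cases "u = v"; cases "u \<in> V") auto
  qed
  have cz: "(\<lambda>u. if u \<in> {v} then p u else restrict z (V - {v}) u) = z"
  proof
    fix u show "(if u \<in> {v} then p u else restrict z (V - {v}) u) = z u"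
      using z eq unfolding configs_def p_def by (cases "u = v"; cases "u \<in> V") auto
  qed
  have ey: "l * F y = m * G y" using bspec[OF all r[of y]] unfolding pin_def cy .
  have ez: "l * F z = m * G z" using bspec[OF all r[of z]] unfolding pin_def cz .
  have "l * (F y * G z - F z * G y) = 0"
  proof -
    have "l * (F y * G z - F z * G y) = (l * F y) * G z - (l * F z) * G y" by algebra
    also have "\<dots> = 0" using ey ez by simp
    finally show ?thesis .
  qed
  moreover have "m * (F y * G z - F z * G y) = 0"
  proof -
    have "m * (F y * G z - F z * G y) = F y * (m * G z) - F z * (m * G y)" by algebra
    also have "\<dots> = 0" using ey[symmetric] ez[symmetric] by simp
    finally show ?thesis .
  qed
  ultimately show ?thesis using lm by auto
qed

theorem mainTheorem7:
  fixes V :: "'v set" and F G :: "('v \<Rightarrow> bool) \<Rightarrow> real"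
  assumes "finite V"
    and "is_signature V F" and "is_signature V G"
    and "\<not> lin_dep V F G"
    and "\<And>D p. D \<subseteq> V \<Longrightarrow> D \<noteq> {} \<Longrightarrow> p \<in> configs D \<Longrightarrow>
           lin_dep (V - D) (pin D p F) (pin D p G)"
  shows "\<exists>x\<in>supp V F. supp V F \<union> supp V G = {x, compl_config V x}"
proof -
  have AD: "F y * G z - F z * G y = 0"
    if "y \<in> configs V" "z \<in> configs V" "v \<in> V" "y v = z v" for y z v
    by (rule agree_det[where V=V and F=F and G=G, OF assms(5) that], assumption+)
  obtain y z where y: "y \<in> configs V" and z: "z \<in> configs V"
    and d: "F y * G z - F z * G y \<noteq> 0"
    using det_exists[OF assms(4)] by blast
  have dis: "y v \<noteq> z v" if "v \<in> V" for v using AD[OF y z that] d by blast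
  have zc: "z = compl_config V y"
    by (rule configs_ext[OF z compl_in[OF y]]) (use dis in \<open>auto simp: compl_config_def\<close>)
  have yc: "y = compl_config V z" using zc compl_compl[OF y] by simp
  have inyz: "w = y \<or> w = z" if w: "w \<in> configs V" and nz: "F w \<noteq> 0 \<or> G w \<noteq> 0" for w
  proof (rule ccontr)
    assume "\<not> (w = y \<or> w = z)"
    then have ny: "w \<noteq> y" and nzz: "w \<noteq> z" by auto
    obtain v where v: "v \<in> V" "w v \<noteq> y v" using ny configs_ext[OF w y] by blast
    obtain u where u: "u \<in> V" "w u \<noteq> z u" using nzz configs_ext[OF w z] by blast
    have "w v = z v" using v dis[OF v(1)] by auto
    then have d1: "F w * G z - F z * G w = 0" using AD[OF w z v(1)] by simp
    have "w u = y u" using u dis[OF u(1)] by auto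
    then have d2: "F w * G y - F y * G w = 0" using AD[OF w y u(1)] by simp
    have e1: "F w * (F y * G z - F z * G y) = F y * (F w * G z - F z * G w) - F z * (F w * G y - F y * G w)"
      by algebra
    have e2: "G w * (F y * G z - F z * G y) = G y * (F w * G z - F z * G w) - G z * (F w * G y - F y * G w)"
      by algebra
    have "F w * (F y * G z - F z * G y) = 0" using e1 d1 d2 by simp
    moreover have "G w * (F y * G z - F z * G y) = 0" using e2 d1 d2 by simp
    ultimately show False using nz d by simp
  qed
  have S: "supp V F \<union> supp V G = {y, z}"
  proof
    show "supp V F \<union> supp V G \<subseteq> {y, z}" using inyz unfolding supp_def by auto
    have "F y \<noteq> 0 \<or> G y \<noteq> 0" "F z \<noteq> 0 \<or> G z \<noteq> 0" using d by auto
    then show "{y, z} \<subseteq> supp V F \<union> supp V G" using y z unfolding supp_def by auto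
  qed
  show ?thesis
  proof (cases "F y = 0")
    case True
    then have "F z \<noteq> 0" using d by auto
    then have "z \<in> supp V F" using z unfolding supp_def by auto
    then show ?thesis using S yc by (intro bexI[of _ z]) auto
  next
    case False
    then have "y \<in> supp V F" using y unfolding supp_def by auto
    then show ?thesis using S zc by (intro bexI[of _ y]) auto
  qed
qed

end
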